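(* Let $\lambda\ge 1$, $n$, $0<R\le\sqrt n$, $m=\lceil\sqrt{5n}/R\rceil$, and partition $[0,\sqrt n]^2$ into $m\times m$ congruent square cells. Let $n$ nodes be placed at points of the square such that every cell contains at least $R^2/\lambda$ and at most $\lambda R^2$ nodes, and let $G$ be the graph on the nodes joining two nodes iff their Euclidean distance is at most $R$. Then, with $\alpha=1/(2\lambda)$, $G$ is an $(h,\alpha R^2/h)$-expander for every $1\le h\le\alpha R^2$.
   Context: For a graph $G$ on $[n]$ and $I\subseteq[n]$, $N(I)$ is the set of nodes outside $I$ adjacent to some node of $I$. $G$ is an $(h,k)$-expander if every $I$ with $|I|\le h$ satisfies $|N(I)|\ge k|I|$. Each node belongs to exactly one cell. *)

theory Defs
  imports "HOL-Analysis.Analysis"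
begin

definition nbhd :: "(nat \<Rightarrow> nat \<Rightarrow> bool) \<Rightarrow> nat \<Rightarrow> nat set \<Rightarrow> nat set" where
  "nbhd adj n I = {v \<in> {0..<n} - I. \<exists>u\<in>I. adj u v}"

definition is_expander :: "(nat \<Rightarrow> nat \<Rightarrow> bool) \<Rightarrow> nat \<Rightarrow> real \<Rightarrow> real \<Rightarrow> bool" where
  "is_expander adj n h k \<longleftrightarrow>
     (\<forall>I. I \<subseteq> {0..<n} \<longrightarrow> real (card I) \<le> h \<longrightarrow> real (card (nbhd adj n I)) \<ge> k * real (card I))"

definition disk_graph :: "(nat \<Rightarrow> real \<times> real) \<Rightarrow> real \<Rightarrow> nat \<Rightarrow> nat \<Rightarrow> bool" where
  "disk_graph pos R u v \<longleftrightarrow> u \<noteq> v \<and> dist (pos u) (pos v) \<le> R"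

text \<open>Grid of m x m congruent square cells of side L/m partitioning [0,L]^2.
  Cell (i,j), i,j < m, is [i s, (i+1) s) x [j s, (j+1) s), where the last row/column
  of cells is closed on the right/top, so that every point belongs to exactly one cell.\<close>
definition cell_index :: "real \<Rightarrow> nat \<Rightarrow> real \<Rightarrow> nat" where
  "cell_index L m x = min (m - 1) (nat \<lfloor>x / (L / real m)\<rfloor>)"

definition cell_of :: "real \<Rightarrow> nat \<Rightarrow> real \<times> real \<Rightarrow> nat \<times> nat" where
  "cell_of L m p = (cell_index L m (fst p), cell_index L m (snd p))"

definition cell_nodes :: "(nat \<Rightarrow> real \<times> real) \<Rightarrow> nat \<Rightarrow> nat \<Rightarrow> nat \<times> nat \<Rightarrow> nat set" where
  "cell_nodes pos n m c = {v \<in> {0..<n}. cell_of (sqrt (real n)) m (pos v) = c}"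

end

theory Submission
  imports Defs
begin

lemma cell_bounds:
  fixes L x :: real and m :: nat
  assumes "L > 0" "m \<ge> 1" "0 \<le> x" "x \<le> L"
  shows "real (cell_index L m x) \<le> x / (L / real m) \<and> x / (L / real m) \<le> real (cell_index L m x) + 1"
proof -
  define s where "s = L / real m"
  have s: "s > 0" using assms unfolding s_def by simp
  have q0: "0 \<le> x / s" using s assms by simp
  have qm: "x / s \<le> real m" using s assms unfolding s_def by (simp add: field_simps)
  have fl: "real (nat \<lfloor>x / s\<rfloor>) \<le> x / s" "x / s < real (nat \<lfloor>x / s\<rfloor>) + 1"
    using q0 by (simp_all add: of_nat_nat)
  show ?thesis
  proof (cases "nat \<lfloor>x / s\<rfloor> \<le> m - 1")
    case True
    then have "cell_index L m x = nat \<lfloor>x / s\<rfloor>" unfolding cell_index_def s_def by simp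
    then show ?thesis using fl s_def by simp
  next
    case False
    then have "cell_index L m x = m - 1" unfolding cell_index_def s_def by simp
    moreover have "real (m - 1) = real m - 1" using assms by simp
    moreover have "real m - 1 \<le> x / s" using False fl assms by linarith
    ultimately show ?thesis using qm s_def by simp
  qed
qed

lemma same_cell_close:
  fixes L x y :: real and m :: nat
  assumes "L > 0" "m \<ge> 1" "0 \<le> x" "x \<le> L" "0 \<le> y" "y \<le> L"
    and "cell_index L m x = cell_index L m y"
  shows "\<bar>x - y\<bar> \<le> L / real m"
proof -
  define s where "s = L / real m"
  have s: "s > 0" using assms unfolding s_def by simp
  have "\<bar>x / (L / real m) - y / (L / real m)\<bar> \<le> 1"
    using cell_bounds[OF assms(1,2,3,4)] cell_bounds[OF assms(1,2,5,6)] assms(7) by linarith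
  then have "\<bar>x / s - y / s\<bar> \<le> 1" unfolding s_def .
  then have "\<bar>(x - y) / s\<bar> \<le> 1" by (simp add: diff_divide_distrib)
  have "\<bar>x - y\<bar> = \<bar>x / s - y / s\<bar> * s" using s by (simp add: abs_divide diff_divide_distrib[symmetric])
  also have "\<dots> \<le> 1 * s" by (rule mult_right_mono) (use s \<open>\<bar>x / s - y / s\<bar> \<le> 1\<close> in auto)
  finally show ?thesis by (simp add: s_def)
qed

theorem mainTheorem5:
  fixes lam R :: real and n m :: nat and pos :: "nat \<Rightarrow> real \<times> real"
  assumes "lam \<ge> 1"
    and "0 < R" and "R \<le> sqrt (real n)"
    and "m = nat \<lceil>sqrt (5 * real n) / R\<rceil>"
    and "\<forall>v<n. fst (pos v) \<in> {0..sqrt (real n)} \<and> snd (pos v) \<in> {0..sqrt (real n)}"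
    and "\<forall>i<m. \<forall>j<m. R\<^sup>2 / lam \<le> real (card (cell_nodes pos n m (i, j))) \<and>
                        real (card (cell_nodes pos n m (i, j))) \<le> lam * R\<^sup>2"
  shows "\<forall>h::real. 1 \<le> h \<and> h \<le> (1 / (2 * lam)) * R\<^sup>2 \<longrightarrow>
           is_expander (disk_graph pos R) n h ((1 / (2 * lam)) * R\<^sup>2 / h)"
proof (intro allI impI)
  fix h :: real
  assume h: "1 \<le> h \<and> h \<le> (1 / (2 * lam)) * R\<^sup>2"
  define L where "L = sqrt (real n)"
  have Lpos: "L > 0" using assms(2,3) unfolding L_def by linarith
  have npos: "real n > 0" using Lpos unfolding L_def by simp
  have q: "sqrt (5 * real n) / R > 0" using npos assms(2) by simp
  have cq: "0 < \<lceil>sqrt (5 * real n) / R\<rceil>" using q by simp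
  have "real m = real_of_int \<lceil>sqrt (5 * real n) / R\<rceil>" using assms(4) cq by simp
  then have mge: "real m \<ge> sqrt (5 * real n) / R" by (simp add: le_of_int_ceiling)
  have m1: "m \<ge> 1" using mge q by simp
  have mpos: "real m > 0" using m1 by simp
  have sR: "L / real m \<le> R / sqrt 5"
  proof -
    have "sqrt (5 * real n) = sqrt 5 * L" unfolding L_def by (simp add: real_sqrt_mult)
    then have "sqrt 5 * L \<le> real m * R" using mge assms(2) by (simp add: divide_le_eq mult.commute)
    then show ?thesis using mpos assms(2) by (simp add: field_simps)
  qed
  have s2: "2 * (L / real m)^2 \<le> R^2"
  proof -
    have "(L / real m)^2 \<le> (R / sqrt 5)^2"
      using sR Lpos mpos by (intro power_mono) auto
    also have "\<dots> = R^2 / 5" by (simp add: power_divide)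
    finally have "(L / real m)^2 \<le> R^2 / 5" .
    then show ?thesis using zero_le_power2[of "L / real m"] by linarith
  qed
  show "is_expander (disk_graph pos R) n h ((1 / (2 * lam)) * R\<^sup>2 / h)"
    unfolding is_expander_def
  proof (intro allI impI)
    fix I assume I: "I \<subseteq> {0..<n}" and cI: "real (card I) \<le> h"
    show "(1 / (2 * lam)) * R\<^sup>2 / h * real (card I) \<le> real (card (nbhd (disk_graph pos R) n I))"
    proof (cases "I = {}")
      case True then show ?thesis by simp
    next
      case False
      then obtain u where u: "u \<in> I" by blast
      have un: "u < n" using u I by auto
      obtain i j where c: "cell_of L m (pos u) = (i, j)" by (metis surj_pair)
      have ij: "i < m" "j < m" using c m1 unfolding cell_of_def cell_index_def by auto
      define C where "C = cell_nodes pos n m (i, j)"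
      have Cb: "R\<^sup>2 / lam \<le> real (card C)" using assms(6) ij C_def by blast
      have sub: "C - I \<subseteq> nbhd (disk_graph pos R) n I"
      proof
        fix v assume v: "v \<in> C - I"
        then have vn: "v < n" and cv: "cell_of L m (pos v) = (i, j)"
          unfolding C_def cell_nodes_def L_def by auto
        have pu: "fst (pos u) \<in> {0..L}" "snd (pos u) \<in> {0..L}" using assms(5) un L_def by auto
        have pv: "fst (pos v) \<in> {0..L}" "snd (pos v) \<in> {0..L}" using assms(5) vn L_def by auto
        have dx: "\<bar>fst (pos u) - fst (pos v)\<bar> \<le> L / real m"
          using same_cell_close[OF Lpos m1] pu pv c cv unfolding cell_of_def by auto
        have dy: "\<bar>snd (pos u) - snd (pos v)\<bar> \<le> L / real m"
          using same_cell_close[OF Lpos m1] pu pv c cv unfolding cell_of_def by auto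
        have "\<bar>fst (pos u) - fst (pos v)\<bar>^2 \<le> (L / real m)^2"
          by (rule power_mono[OF dx]) simp
        then have "(fst (pos u) - fst (pos v))^2 \<le> (L / real m)^2" by simp
        moreover have "(snd (pos u) - snd (pos v))^2 \<le> (L / real m)^2"
          using dy by (metis abs_ge_zero power2_abs power_mono)
        ultimately have "(fst (pos u) - fst (pos v))^2 + (snd (pos u) - snd (pos v))^2 \<le> R^2"
          using s2 by linarith
        then have "sqrt ((fst (pos u) - fst (pos v))^2 + (snd (pos u) - snd (pos v))^2) \<le> R"
          using assms(2) real_sqrt_le_mono[of _ "R^2"] by fastforce
        then have "dist (pos u) (pos v) \<le> R"
          by (simp add: dist_prod_def dist_real_def)
        moreover have "u \<noteq> v" using u v by auto
        ultimately show "v \<in> nbhd (disk_graph pos R) n I"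
          unfolding nbhd_def disk_graph_def using v vn u by auto
      qed
      have fin: "finite (nbhd (disk_graph pos R) n I)" unfolding nbhd_def by auto
      have finI: "finite I" using I finite_subset by blast
      have "card C - card I \<le> card (C - I)" by (rule diff_card_le_card_Diff[OF finI])
      then have "real (card C) - real (card I) \<le> real (card (C - I))" by linarith
      also have "\<dots> \<le> real (card (nbhd (disk_graph pos R) n I))"
        using card_mono[OF fin sub] by simp
      finally have N: "R\<^sup>2 / lam - real (card I) \<le> real (card (nbhd (disk_graph pos R) n I))"
        using Cb by linarith
      have lam0: "lam > 0" using assms(1) by simp
      have hpos: "h > 0" using h by simp
      have "real (card I) \<le> (1 / (2 * lam)) * R\<^sup>2" using cI h by linarith
      then have "(1 / (2 * lam)) * R\<^sup>2 \<le> R\<^sup>2 / lam - real (card I)" using lam0 by (simp add: field_simps)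
      moreover have "(1 / (2 * lam)) * R\<^sup>2 / h * real (card I) \<le> (1 / (2 * lam)) * R\<^sup>2"
      proof -
        have "real (card I) / h \<le> 1" using cI hpos by simp
        moreover have "(1 / (2 * lam)) * R\<^sup>2 \<ge> 0" using lam0 by simp
        ultimately have "(1 / (2 * lam)) * R\<^sup>2 * (real (card I) / h) \<le> (1 / (2 * lam)) * R\<^sup>2"
          by (rule mult_left_le)
        moreover have "(1 / (2 * lam)) * R\<^sup>2 / h * real (card I) = (1 / (2 * lam)) * R\<^sup>2 * (real (card I) / h)" by simp
        ultimately show ?thesis by simp
      qed
      ultimately show ?thesis using N by linarith
    qed
  qed
qed

end
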